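(* Let $\mathcal{P}=\{p_1>p_2>\cdots>p_k\}$ be a finite nonempty set of positive integers. Then the pair $(\mathcal{P},\mathcal{P})$ is bigraphic, and there is a bipartite graph realizing $(\mathcal{P},\mathcal{P})$ in which each stable set has exactly $p_1$ vertices; moreover, such a graph can be chosen to be a mirror bipartite graph.
   Context: For finite sets of integers $\mathcal{P}=\{p_1>\cdots>p_{k_1}\}$ and $\mathcal{Q}=\{q_1>\cdots>q_{k_2}\}$, a bipartite graph $G$ with stable sets $V_1,V_2$ realizes the pair $(\mathcal{P},\mathcal{Q})$ if the set of degrees of vertices in $V_1$ is exactly $\mathcal{P}$ (each $p_i$ occurring at least once, and no other value occurring) and the set of degrees of vertices in $V_2$ is exactly $\mathcal{Q}$; the pair is bigraphic if such $G$ exists. A bipartite graph $G=(V_1\cup V_2,E)$ is mirror if there is a bijection $\varphi:V_1\to V_2$ with $u\varphi(v)\in E \iff \varphi(u)v\in E$ for all $u,v\in V_1$. *)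

theory Defs
  imports Main
begin

text \<open>Using two (possibly different) types makes the
  stable sets automatically disjoint.\<close>

definition bipartite_graph :: "'a set \<Rightarrow> 'b set \<Rightarrow> ('a \<times> 'b) set \<Rightarrow> bool" where
  "bipartite_graph V1 V2 E \<longleftrightarrow> finite V1 \<and> finite V2 \<and> E \<subseteq> V1 \<times> V2"

definition deg1 :: "'b set \<Rightarrow> ('a \<times> 'b) set \<Rightarrow> 'a \<Rightarrow> nat" where
  "deg1 V2 E u = card {v \<in> V2. (u, v) \<in> E}"

definition deg2 :: "'a set \<Rightarrow> ('a \<times> 'b) set \<Rightarrow> 'b \<Rightarrow> nat" where
  "deg2 V1 E v = card {u \<in> V1. (u, v) \<in> E}"

definition realizes :: "'a set \<Rightarrow> 'b set \<Rightarrow> ('a \<times> 'b) set \<Rightarrow> nat set \<Rightarrow> nat set \<Rightarrow> bool" where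
  "realizes V1 V2 E P Q \<longleftrightarrow> bipartite_graph V1 V2 E \<and>
     deg1 V2 E ` V1 = P \<and> deg2 V1 E ` V2 = Q"

definition bigraphic :: "nat set \<Rightarrow> nat set \<Rightarrow> bool" where
  "bigraphic P Q \<longleftrightarrow> (\<exists>(V1::nat set) (V2::nat set) E. realizes V1 V2 E P Q)"

definition mirror :: "'a set \<Rightarrow> 'b set \<Rightarrow> ('a \<times> 'b) set \<Rightarrow> bool" where
  "mirror V1 V2 E \<longleftrightarrow> (\<exists>\<phi>. bij_betw \<phi> V1 V2 \<and>
     (\<forall>u\<in>V1. \<forall>v\<in>V1. (u, \<phi> v) \<in> E \<longleftrightarrow> (v, \<phi> u) \<in> E))"

end

theory Submission
  imports Defs
begin

definition rk :: "nat set \<Rightarrow> nat \<Rightarrow> nat" where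
  "rk P u = card {q\<in>P. q \<le> u}"

lemma rk_mono: "finite P \<Longrightarrow> u \<le> v \<Longrightarrow> rk P u \<le> rk P v"
  unfolding rk_def by (rule card_mono) auto

lemma rk_Suc: "finite P \<Longrightarrow> rk P (Suc u) \<le> Suc (rk P u)"
proof -
  assume f: "finite P"
  have "{q\<in>P. q \<le> Suc u} \<subseteq> insert (Suc u) {q\<in>P. q \<le> u}" by auto
  hence "rk P (Suc u) \<le> card (insert (Suc u) {q\<in>P. q \<le> u})"
    unfolding rk_def by (rule card_mono[rotated]) (use f in auto)
  also have "\<dots> \<le> Suc (rk P u)" unfolding rk_def using f by (simp add: card_insert_if)
  finally show ?thesis .
qed

lemma rk_Suc_notin: "Suc u \<notin> P \<Longrightarrow> rk P (Suc u) = rk P u"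
proof -
  assume "Suc u \<notin> P"
  hence "{q\<in>P. q \<le> Suc u} = {q\<in>P. q \<le> u}" by (auto simp: le_Suc_eq)
  thus ?thesis by (simp add: rk_def)
qed

lemma rk_0: "0 \<notin> P \<Longrightarrow> rk P 0 = 0"
proof -
  assume "0 \<notin> P"
  hence "{q\<in>P. q \<le> 0} = {}" by auto
  thus ?thesis by (simp add: rk_def)
qed

lemma rk_least:
  assumes f: "finite P" and z: "0 \<notin> P" and s: "s \<le> rk P N"
    and w: "w = (LEAST w. s \<le> rk P w)"
  shows "rk P w = s \<and> w \<le> N \<and> (\<forall>v<w. rk P v < s) \<and> (0 < s \<longrightarrow> w \<in> P)"
proof -
  have ge: "s \<le> rk P w" using s w by (metis LeastI)
  have le: "w \<le> N" using s w by (simp add: Least_le)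
  have lt: "\<forall>v<w. rk P v < s" using w not_less_Least by (metis not_le)
  show ?thesis
  proof (cases w)
    case 0
    with ge rk_0[OF z] show ?thesis using le lt by simp
  next
    case (Suc w')
    have a: "rk P w' < s" using lt Suc by simp
    have b: "rk P w \<le> Suc (rk P w')" using rk_Suc[OF f] Suc by simp
    have c: "w \<in> P" using rk_Suc_notin[of w' P] a ge Suc by (metis not_le)
    show ?thesis using a b c ge le lt by simp
  qed
qed

lemma rk_Max: "finite P \<Longrightarrow> P \<noteq> {} \<Longrightarrow> rk P (Max P) = card P"
proof -
  assume "finite P" "P \<noteq> {}"
  hence "{q\<in>P. q \<le> Max P} = P" by auto
  thus ?thesis by (simp add: rk_def)
qed

lemma rk_Max1: "finite P \<Longrightarrow> P \<noteq> {} \<Longrightarrow> 0 \<notin> P \<Longrightarrow> rk P (Max P - 1) = card P - 1"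
proof -
  assume f: "finite P" "P \<noteq> {}" "0 \<notin> P"
  hence m: "Max P \<in> P" "Max P > 0" by (auto, metis Max_in gr0I)
  have "{q\<in>P. q \<le> Max P - 1} = P - {Max P}" using f m
    by (auto simp: le_diff_conv2) (metis Max_ge Suc_pred' less_Suc_eq_le le_neq_implies_less m(2) not_less)+
  thus ?thesis using f m by (simp add: rk_def)
qed

lemma rk_pred_lt: "finite P \<Longrightarrow> p \<in> P \<Longrightarrow> v < p \<Longrightarrow> rk P v < rk P p"
proof -
  assume f: "finite P" "p \<in> P" "v < p"
  have "p \<notin> {q\<in>P. q \<le> v}" "p \<in> {q\<in>P. q \<le> p}" using f by auto
  moreover have "{q\<in>P. q \<le> v} \<subseteq> {q\<in>P. q \<le> p}" using f by auto
  ultimately have "{q\<in>P. q \<le> v} \<subset> {q\<in>P. q \<le> p}" by blast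
  thus ?thesis unfolding rk_def by (rule psubset_card_mono[rotated]) (use f in auto)
qed

theorem theorem5:
  fixes P :: "nat set"
  assumes "finite P" and "P \<noteq> {}" and "\<forall>p\<in>P. p > 0"
  shows "bigraphic P P \<and>
    (\<exists>(V1::nat set) (V2::nat set) E. realizes V1 V2 E P P \<and>
        card V1 = Max P \<and> card V2 = Max P \<and> mirror V1 V2 E)"
proof -
  note f = assms(1) and ne = assms(2)
  have z: "0 \<notin> P" using assms(3) by auto
  define n where "n = Max P"
  define k where "k = card P"
  define V where "V = {0..<n}"
  define E where "E = {(u,v). u < n \<and> v < n \<and> rk P u + rk P v < k}"
  have nP: "n \<in> P" using f ne n_def by simp
  have rn1: "rk P (n - 1) = k - 1" using rk_Max1[OF f ne z] n_def k_def by simp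
  have kpos: "k > 0" using f ne k_def by (simp add: card_gt_0_iff)
  have deg: "deg1 V E u = (LEAST w. k - rk P u \<le> rk P w) \<and>
             (LEAST w. k - rk P u \<le> rk P w) \<in> P" if u: "u < n" for u
  proof -
    define t where "t = k - rk P u"
    define w where "w = (LEAST w. t \<le> rk P w)"
    have ru: "rk P u \<le> k - 1" using rk_mono[OF f, of u "n-1"] u rn1 by simp
    have t1: "t > 0" "t \<le> rk P n" using ru kpos rk_Max[OF f ne] n_def k_def t_def by auto
    note L = rk_least[OF f z t1(2) w_def]
    have "{v \<in> V. (u, v) \<in> E} = {..<w}"
    proof (intro set_eqI iffI)
      fix v assume "v \<in> {v \<in> V. (u, v) \<in> E}"
      hence "rk P v < t" unfolding E_def t_def using ru by auto
      thus "v \<in> {..<w}" using L rk_mono[OF f, of w v] by (metis lessThan_iff not_le)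
    next
      fix v assume "v \<in> {..<w}"
      thus "v \<in> {v \<in> V. (u, v) \<in> E}" using L u ru unfolding E_def V_def t_def by auto
    qed
    thus ?thesis using L t1 unfolding deg1_def t_def w_def by simp
  qed
  have deg2eq: "deg2 V E v = deg1 V E v" for v
  proof -
    have "{u \<in> V. (u, v) \<in> E} = {u \<in> V. (v, u) \<in> E}" unfolding E_def by (auto simp: add.commute)
    thus ?thesis by (simp add: deg1_def deg2_def)
  qed
  have img: "deg1 V E ` V = P"
  proof
    show "deg1 V E ` V \<subseteq> P" using deg V_def by auto
  next
    show "P \<subseteq> deg1 V E ` V"
    proof
      fix p assume p: "p \<in> P"
      define t where "t = rk P p"
      have tpos: "t > 0" using rk_pred_lt[OF f p, of 0] p z t_def by (cases p) auto
      have tk: "t \<le> k" using rk_mono[OF f, of p n] rk_Max[OF f ne] n_def k_def t_def p f by simp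
      define s where "s = k - t"
      have s1: "s \<le> rk P (n - 1)" using rn1 s_def tpos tk by simp
      define u where "u = (LEAST w. s \<le> rk P w)"
      note L = rk_least[OF f z s1 u_def]
      have un: "u < n" using L nP z by (metis Suc_pred' diff_le_self gr0I le_imp_less_Suc)
      have "(LEAST w. k - rk P u \<le> rk P w) = p"
      proof (rule Least_equality)
        show "k - rk P u \<le> rk P p" using L s_def t_def tk by simp
      next
        fix y assume "k - rk P u \<le> rk P y"
        hence "t \<le> rk P y" using L s_def tk by simp
        thus "p \<le> y" using rk_pred_lt[OF f p, of y] t_def by (metis not_le)
      qed
      hence "deg1 V E u = p" using deg[OF un] by simp
      thus "p \<in> deg1 V E ` V" using un V_def by force
    qed
  qed
  have real: "realizes V V E P P"
    unfolding realizes_def bipartite_graph_def using img deg2eq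
    by (auto simp: V_def E_def)
  have mir: "mirror V V E"
    unfolding mirror_def by (rule exI[of _ id]) (auto simp: E_def add.commute)
  have cV: "card V = Max P" using V_def n_def by simp
  show ?thesis using real mir cV unfolding bigraphic_def by blast
qed

end
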